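(* Let $c_1<0$, $c_2,c_3\in\mathbb{R}$ and define $p(a,x)=c_1a+c_2x+c_3$ for $a\in\{0,1\}$, $x\in\mathbb{R}$. Consider two patient classes $i=1,2$: in class $i$ the feature $x$ is distributed as $\mathcal N(\mu_i,\sigma_i^2)$ with density $f_i$, and for weeks $h=1,\dots,4$ there are numbers $\alpha_i^h$ (the proportion of class-$i$ readmissions occurring in week $h$) such that the class-$i$ week-$h$ readmission risk is $p_i^h(a,x)=\alpha_i^h\,p(a,x)$. (i) For each $i$, $p_i^h(a,x)=c^h_{1,i}a+c^h_{2,i}x+c^h_{3,i}$ with $c^h_{j,i}=\alpha_i^hc_j$, $j=1,2,3$. (ii) Let the population be a mixture of the two classes with probabilities $q_1,q_2\in(0,1)$, $q_1+q_2=1$, and define the mixture week-$h$ risk $p^h(a,x)=\sum_{i=1}^2\frac{q_if_i(x)}{q_1f_1(x)+q_2f_2(x)}\,p_i^h(a,x)$. If $\alpha_1^h\neq\alpha_2^h$ and the feature distributions of the two classes are different, then $p^h(a,x)$ is not a linear (affine) function of $(a,x)$. *)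

theory Defs
  imports "HOL-Probability.Probability"
begin

definition base_risk :: "real \<Rightarrow> real \<Rightarrow> real \<Rightarrow> real \<Rightarrow> real \<Rightarrow> real" where
  "base_risk c1 c2 c3 a x = c1 * a + c2 * x + c3"

definition class_risk ::
  "(nat \<Rightarrow> nat \<Rightarrow> real) \<Rightarrow> nat \<Rightarrow> nat \<Rightarrow> real \<Rightarrow> real \<Rightarrow> real \<Rightarrow> real \<Rightarrow> real \<Rightarrow> real" where
  "class_risk \<alpha> i h c1 c2 c3 a x = \<alpha> i h * base_risk c1 c2 c3 a x"

definition mix_risk ::
  "(nat \<Rightarrow> real) \<Rightarrow> (nat \<Rightarrow> real) \<Rightarrow> (nat \<Rightarrow> real) \<Rightarrow> (nat \<Rightarrow> nat \<Rightarrow> real) \<Rightarrow> nat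
     \<Rightarrow> real \<Rightarrow> real \<Rightarrow> real \<Rightarrow> real \<Rightarrow> real \<Rightarrow> real" where
  "mix_risk q \<mu> \<sigma> \<alpha> h c1 c2 c3 a x =
     (\<Sum>i\<in>{1,2}. q i * normal_density (\<mu> i) (\<sigma> i) x
                  / (\<Sum>j\<in>{1,2}. q j * normal_density (\<mu> j) (\<sigma> j) x)
                  * class_risk \<alpha> i h c1 c2 c3 a x)"

end

theory Submission
  imports Defs
begin

lemma nd_ratio_const:
  fixes m1 m2 s1 s2 :: real
  assumes s1: "s1 > 0" and s2: "s2 > 0"
    and H: "\<And>x. normal_density m1 s1 x * normal_density m2 s2 0 = normal_density m1 s1 0 * normal_density m2 s2 x"
  shows "m1 = m2 \<and> s1 = s2"
proof -
  define E1 where "E1 x = -(x - m1)\<^sup>2 / (2 * s1\<^sup>2)" for x :: real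
  define E2 where "E2 x = -(x - m2)\<^sup>2 / (2 * s2\<^sup>2)" for x :: real
  define k1 where "k1 = 1 / sqrt (2 * pi * s1\<^sup>2)"
  define k2 where "k2 = 1 / sqrt (2 * pi * s2\<^sup>2)"
  have k1: "k1 > 0" using s1 by (simp add: k1_def)
  have k2: "k2 > 0" using s2 by (simp add: k2_def)
  have E: "E1 x + E2 0 = E1 0 + E2 x" for x
  proof -
    have "k1 * exp (E1 x) * (k2 * exp (E2 0)) = k1 * exp (E1 0) * (k2 * exp (E2 x))"
      using H[of x] unfolding normal_density_def E1_def E2_def k1_def k2_def by simp
    then have "exp (E1 x + E2 0) = exp (E1 0 + E2 x)"
      using k1 k2 by (simp add: exp_add mult_ac)
    then show ?thesis by simp
  qed
  have a: "E1 1 + E2 0 = E1 0 + E2 1" by (rule E)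
  have b: "E1 (-1) + E2 0 = E1 0 + E2 (-1)" by (rule E)
  define t1 where "t1 = s1\<^sup>2"
  define t2 where "t2 = s2\<^sup>2"
  have t1: "t1 > 0" using s1 by (simp add: t1_def)
  have t2: "t2 > 0" using s2 by (simp add: t2_def)
  have g1: "E1 y - E1 0 = (2*m1*y - y\<^sup>2) / (2*t1)" for y
  proof -
    have "E1 y - E1 0 = (-(y-m1)\<^sup>2 + (0-m1)\<^sup>2)/(2*t1)" by (simp add: E1_def t1_def diff_divide_distrib)
    also have "\<dots> = (2*m1*y - y\<^sup>2) / (2*t1)" by (simp add: power2_eq_square algebra_simps)
    finally show ?thesis .
  qed
  have g2: "E2 y - E2 0 = (2*m2*y - y\<^sup>2) / (2*t2)" for y
  proof -
    have "E2 y - E2 0 = (-(y-m2)\<^sup>2 + (0-m2)\<^sup>2)/(2*t2)" by (simp add: E2_def t2_def diff_divide_distrib)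
    also have "\<dots> = (2*m2*y - y\<^sup>2) / (2*t2)" by (simp add: power2_eq_square algebra_simps)
    finally show ?thesis .
  qed
  have e1: "E1 1 - E1 0 = (2*m1 - 1) / (2*t1)" "E1 (-1) - E1 0 = (-2*m1 - 1) / (2*t1)"
    using g1[of 1] g1[of "-1"] by simp_all
  have e2: "E2 1 - E2 0 = (2*m2 - 1) / (2*t2)" "E2 (-1) - E2 0 = (-2*m2 - 1) / (2*t2)"
    using g2[of 1] g2[of "-1"] by simp_all
  have a': "(2*m1 - 1) / (2*t1) = (2*m2 - 1) / (2*t2)" using a e1 e2 by linarith
  have b': "(-2*m1 - 1) / (2*t1) = (-2*m2 - 1) / (2*t2)" using b e1 e2 by linarith
  have "(2*m1 - 1) * t2 = (2*m2 - 1) * t1" using a' t1 t2 by (simp add: field_simps)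
  moreover have "(-2*m1 - 1) * t2 = (-2*m2 - 1) * t1" using b' t1 t2 by (simp add: field_simps)
  ultimately have tt: "t1 = t2" and "m1 * t2 = m2 * t1" by (simp_all add: algebra_simps)
  then have "m1 = m2" using t1 by simp
  moreover have "s1 = s2" using tt s1 s2 unfolding t1_def t2_def
    by (simp add: power2_eq_iff_nonneg)
  ultimately show ?thesis by simp
qed

theorem proposition2:
  fixes c1 c2 c3 :: real and q \<mu> \<sigma> :: "nat \<Rightarrow> real" and \<alpha> :: "nat \<Rightarrow> nat \<Rightarrow> real"
  assumes "c1 < 0"
    and "\<sigma> 1 > 0" and "\<sigma> 2 > 0"
    and "0 < q 1" and "q 1 < 1" and "0 < q 2" and "q 2 < 1" and "q 1 + q 2 = 1"
  shows "(\<forall>i\<in>{1,2}. \<forall>h\<in>{1..4}. \<forall>a\<in>{0,1}. \<forall>x.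
            class_risk \<alpha> i h c1 c2 c3 a x = (\<alpha> i h * c1) * a + (\<alpha> i h * c2) * x + \<alpha> i h * c3)
       \<and> (\<forall>h\<in>{1..4}. \<alpha> 1 h \<noteq> \<alpha> 2 h \<and> (\<mu> 1, \<sigma> 1) \<noteq> (\<mu> 2, \<sigma> 2) \<longrightarrow>
            \<not> (\<exists>b1 b2 b3. \<forall>a\<in>{0,1}. \<forall>x.
                  mix_risk q \<mu> \<sigma> \<alpha> h c1 c2 c3 a x = b1 * a + b2 * x + b3))"
proof (intro conjI ballI allI impI notI)
  fix i h a x
  show "class_risk \<alpha> i h c1 c2 c3 a x = (\<alpha> i h * c1) * a + (\<alpha> i h * c2) * x + \<alpha> i h * c3"
    by (simp add: class_risk_def base_risk_def algebra_simps)
next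
  fix h :: nat
  assume ne: "\<alpha> 1 h \<noteq> \<alpha> 2 h \<and> (\<mu> 1, \<sigma> 1) \<noteq> (\<mu> 2, \<sigma> 2)"
  assume "\<exists>b1 b2 b3. \<forall>a\<in>{0,1}. \<forall>x. mix_risk q \<mu> \<sigma> \<alpha> h c1 c2 c3 a x = b1 * a + b2 * x + b3"
  then obtain b1 b2 b3 where B: "\<And>a x. a \<in> {0,1} \<Longrightarrow> mix_risk q \<mu> \<sigma> \<alpha> h c1 c2 c3 a x = b1 * a + b2 * x + b3"
    by blast
  define f1 where "f1 x = normal_density (\<mu> 1) (\<sigma> 1) x" for x
  define f2 where "f2 x = normal_density (\<mu> 2) (\<sigma> 2) x" for x
  define D where "D x = q 1 * f1 x + q 2 * f2 x" for x
  have f1p: "f1 x > 0" for x using assms(2) by (simp add: f1_def normal_density_pos)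
  have f2p: "f2 x > 0" for x using assms(3) by (simp add: f2_def normal_density_pos)
  have Dp: "D x > 0" for x using f1p[of x] f2p[of x] assms(4,6) by (simp add: D_def add_pos_pos)
  define W where "W x = q 1 * f1 x / D x * \<alpha> 1 h + q 2 * f2 x / D x * \<alpha> 2 h" for x
  have mix: "mix_risk q \<mu> \<sigma> \<alpha> h c1 c2 c3 a x = W x * (c1 * a + c2 * x + c3)" for a x
    unfolding mix_risk_def W_def D_def f1_def f2_def class_risk_def base_risk_def
    by (simp add: algebra_simps)
  have Wc: "W x * c1 = b1" for x
    using B[of 1 x] B[of 0 x] unfolding mix by (simp add: algebra_simps)
  have "W x = W 0" for x using Wc[of x] Wc[of 0] assms(1) by (metis less_irrefl mult_right_cancel)
  have Weq: "W x = \<alpha> 2 h + (\<alpha> 1 h - \<alpha> 2 h) * (q 1 * f1 x / D x)" for x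
  proof -
    have "q 2 * f2 x / D x = 1 - q 1 * f1 x / D x" using Dp[of x]
      by (simp add: D_def field_simps)
    then have "W x = q 1 * f1 x / D x * \<alpha> 1 h + (1 - q 1 * f1 x / D x) * \<alpha> 2 h"
      unfolding W_def by simp
    then show ?thesis by (simp add: algebra_simps)
  qed
  have R: "q 1 * f1 x / D x = q 1 * f1 0 / D 0" for x
  proof -
    have "(\<alpha> 1 h - \<alpha> 2 h) * (q 1 * f1 x / D x) = (\<alpha> 1 h - \<alpha> 2 h) * (q 1 * f1 0 / D 0)"
      using \<open>W x = W 0\<close> unfolding Weq by linarith
    moreover have "\<alpha> 1 h - \<alpha> 2 h \<noteq> 0" using ne by simp
    ultimately show ?thesis by (metis mult_left_cancel)
  qed
  have "f1 x * f2 0 = f1 0 * f2 x" for x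
  proof -
    have "q 1 * f1 x * D 0 = q 1 * f1 0 * D x" using R[of x] Dp[of x] Dp[of 0]
      by (simp add: field_simps)
    then have "q 1 * q 2 * (f1 x * f2 0) = q 1 * q 2 * (f1 0 * f2 x)"
      unfolding D_def by (simp add: algebra_simps)
    then show ?thesis using assms(4,6) by simp
  qed
  then have "\<mu> 1 = \<mu> 2 \<and> \<sigma> 1 = \<sigma> 2"
    using nd_ratio_const[OF assms(2,3)] unfolding f1_def f2_def by blast
  then show False using ne by simp
qed

end
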